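(* Let $\mathcal{D}$ be the set of density operators on a finite-dimensional Hilbert space, with trace distance $d(\rho,\sigma)=\frac12\|\rho-\sigma\|_1$. Let $S_1\subseteq S_2\subseteq\cdots$ be closed convex subsets of $\mathcal{D}$, and let $V\subseteq\mathcal{D}$ be a set such that for every $\sigma\in V$ and every $\varepsilon>0$ there exist $N$ and $\eta\in S_N$ with $d(\sigma,\eta)<\varepsilon$. Let $\kappa\in V$ be such that for some $\delta>0$ every Hermitian unit-trace operator $\omega$ with $\|\omega-\kappa\|_1\le\delta$ is a density operator belonging to $V$. Then $\kappa\in S_n$ for some $n$. *)

theory Defs
  imports "HOL-Analysis.Analysis"
begin

definition cadj :: "complex^'n^'n \<Rightarrow> complex^'n^'n" where
  "cadj A = (\<chi> i j. cnj (A $ j $ i))"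

definition herm :: "complex^'n^'n \<Rightarrow> bool" where
  "herm A \<longleftrightarrow> cadj A = A"

definition cinner :: "complex^'n \<Rightarrow> complex^'n \<Rightarrow> complex" where
  "cinner x y = (\<Sum>i\<in>UNIV. cnj (x $ i) * y $ i)"

definition psd :: "complex^'n^'n \<Rightarrow> bool" where
  "psd A \<longleftrightarrow> (\<forall>x. Im (cinner x (A *v x)) = 0 \<and> Re (cinner x (A *v x)) \<ge> 0)"

definition density :: "complex^'n^'n \<Rightarrow> bool" where
  "density A \<longleftrightarrow> herm A \<and> psd A \<and> trace A = 1"

definition mat_abs :: "complex^'n^'n \<Rightarrow> complex^'n^'n" where
  "mat_abs X = (THE P. psd P \<and> P ** P = cadj X ** X)"

definition trnorm :: "complex^'n^'n \<Rightarrow> real" where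
  "trnorm X = Re (trace (mat_abs X))"

definition trdist :: "complex^'n^'n \<Rightarrow> complex^'n^'n \<Rightarrow> real" where
  "trdist \<rho> \<sigma> = trnorm (\<rho> - \<sigma>) / 2"

definition trclosed :: "(complex^'n^'n) set \<Rightarrow> bool" where
  "trclosed S \<longleftrightarrow> (\<forall>\<rho>. density \<rho> \<longrightarrow> (\<forall>e>0. \<exists>\<sigma>\<in>S. trdist \<rho> \<sigma> < e) \<longrightarrow> \<rho> \<in> S)"

end

theory Submission imports Defs begin

lemma cinner_add_right: "cinner x (y + z) = cinner x y + cinner x z"
  by (simp add: cinner_def sum.distrib distrib_left)
lemma cinner_diff_right: "cinner x (y - z) = cinner x y - cinner x z"
  by (simp add: cinner_def sum_subtractf right_diff_distrib)
lemma cinner_add_left: "cinner (x + y) z = cinner x z + cinner y z"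
  by (simp add: cinner_def sum.distrib distrib_right)
lemma cinner_diff_left: "cinner (x - y) z = cinner x z - cinner y z"
  by (simp add: cinner_def sum_subtractf left_diff_distrib)
lemma cinner_scaleC_right: "cinner x (c *s y) = c * cinner x y"
  by (simp add: cinner_def sum_distrib_left mult_ac)
lemma cinner_scaleC_left: "cinner (c *s x) y = cnj c * cinner x y"
  by (simp add: cinner_def sum_distrib_left mult_ac)
lemma cinner_zero_right[simp]: "cinner x 0 = 0"
  by (simp add: cinner_def)
lemma cinner_zero_left[simp]: "cinner 0 x = 0"
  by (simp add: cinner_def)
lemma cinner_cnj: "cnj (cinner x y) = cinner y x"
  by (simp add: cinner_def mult_ac)
lemma scaleR_vec_eq: "(r::real) *\<^sub>R (x::complex^'n) = (complex_of_real r) *s x"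
  by (simp add: vec_eq_iff scaleR_conv_of_real[where 'a=complex])
lemma cinner_scaleR_right: "cinner x (r *\<^sub>R y) = of_real r * cinner x y"
  by (simp add: scaleR_vec_eq cinner_scaleC_right)
lemma inner_cinner: "(x::complex^'n) \<bullet> y = Re (cinner x y)"
  by (simp add: inner_vec_def cinner_def inner_complex_def Re_sum)
lemma cinner_self_Im: "Im (cinner x x) = 0"
  by (simp add: cinner_def Im_sum)
lemma cinner_self: "cinner x x = of_real ((norm x)^2)"
proof -
  have "(norm x)^2 = x \<bullet> x" by (simp add: power2_norm_eq_inner)
  then show ?thesis using cinner_self_Im[of x] by (simp add: inner_cinner complex_eq_iff)
qed
lemma cinner_self_eq0: "cinner x x = 0 \<longleftrightarrow> x = 0"
  by (simp add: cinner_self)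

lemma cinner_adj: "cinner x (A *v y) = cinner (cadj A *v x) y"
proof -
  have "cinner x (A *v y) = (\<Sum>i\<in>UNIV. \<Sum>j\<in>UNIV. cnj (x $ i) * (A$i$j * y $ j))"
    by (simp add: cinner_def matrix_vector_mult_def sum_distrib_left)
  also have "\<dots> = (\<Sum>j\<in>UNIV. \<Sum>i\<in>UNIV. cnj (x $ i) * (A$i$j * y $ j))"
    by (rule sum.swap)
  also have "\<dots> = cinner (cadj A *v x) y"
    by (simp add: cinner_def matrix_vector_mult_def cadj_def sum_distrib_right mult_ac) (simp add: sum_distrib_left)
  finally show ?thesis .
qed

lemma herm_cinner: "herm A \<Longrightarrow> cinner x (A *v y) = cinner (A *v x) y"
  by (simp add: herm_def cinner_adj)

lemma mult_scaleR_vec: "(A::complex^'n^'m) *v (r *\<^sub>R x) = r *\<^sub>R (A *v x)"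
  by (simp add: vec_eq_iff matrix_vector_mult_def scaleR_sum_right)

lemma herm_inner: "herm A \<Longrightarrow> x \<bullet> (A *v y) = (A *v x) \<bullet> y"
  by (simp add: inner_cinner herm_cinner)

lemma core:
  fixes F :: "'a::real_inner \<Rightarrow> 'a"
  assumes lin: "\<And>x y t. F (x + t *\<^sub>R y) = F x + t *\<^sub>R F y"
    and sym: "\<And>x y. x \<bullet> F y = F x \<bullet> y"
    and neg: "\<And>t. (u + t *\<^sub>R F u) \<bullet> F (u + t *\<^sub>R F u) \<le> 0"
    and z: "u \<bullet> F u = 0"
  shows "F u = 0"
proof (rule ccontr)
  assume nz: "F u \<noteq> 0"
  define y where "y = F u"
  define a where "a = y \<bullet> y"
  define c where "c = y \<bullet> F y"
  have a: "a > 0" using nz by (simp add: a_def y_def)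
  have uy: "u \<bullet> F y = a" using sym[of u y] by (simp add: a_def y_def)
  have g: "\<And>t. (u + t *\<^sub>R y) \<bullet> F (u + t *\<^sub>R y) = 2 * t * a + t^2 * c"
  proof -
    fix t
    have "(u + t *\<^sub>R y) \<bullet> F (u + t *\<^sub>R y) = (u + t *\<^sub>R y) \<bullet> (F u + t *\<^sub>R F y)"
      by (simp add: lin)
    also have "\<dots> = u \<bullet> F u + t * (u \<bullet> F y) + t * (y \<bullet> F u) + t * t * (y \<bullet> F y)"
      by (simp add: inner_add_left inner_add_right algebra_simps)
    also have "\<dots> = 2 * t * a + t^2 * c"
      using z uy by (simp add: a_def c_def y_def power2_eq_square)
    finally show "(u + t *\<^sub>R y) \<bullet> F (u + t *\<^sub>R y) = 2 * t * a + t^2 * c" .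
  qed
  define t where "t = a / (\<bar>c\<bar> + 1)"
  have t: "t > 0" using a by (simp add: t_def)
  have "2 * t * a + t^2 * c \<le> 0" using neg[of t] g[of t] by (simp add: y_def)
  hence "t * (2 * a + t * c) \<le> 0" by (simp add: algebra_simps power2_eq_square)
  hence h: "2 * a + t * c \<le> 0" using t by (simp add: mult_le_0_iff)
  have "t * \<bar>c\<bar> \<le> a" unfolding t_def using a
    by (simp add: field_simps)
  moreover have "t * (-c) \<le> t * \<bar>c\<bar>" using t by (intro mult_left_mono) auto
  hence "- (t * \<bar>c\<bar>) \<le> t * c" by simp
  ultimately show False using h a by linarith
qed


lemma cont_cinner: "continuous_on UNIV (\<lambda>x. cinner w x)"
  unfolding cinner_def by (intro continuous_intros)

lemma cont_quad: "continuous_on UNIV (\<lambda>x::complex^'n. x \<bullet> (A *v x))"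
  unfolding inner_cinner cinner_def matrix_vector_mult_def by (intro continuous_intros)

lemma eigvec:
  fixes A :: "complex^'n^'n"
  assumes hA: "herm A"
    and ev: "\<forall>i\<in>I. A *v v i = complex_of_real (l i) *s v i"
    and x0: "\<forall>i\<in>I. cinner (v i) x0 = 0" and x0nz: "x0 \<noteq> 0"
  shows "\<exists>u \<mu>. (\<forall>i\<in>I. cinner (v i) u = 0) \<and> norm u = 1 \<and> A *v u = complex_of_real \<mu> *s u"
proof -
  define W where "W = {x. \<forall>i\<in>I. cinner (v i) x = 0}"
  have Wlin: "a + t *\<^sub>R b \<in> W" if "a \<in> W" "b \<in> W" for a b t
    using that by (simp add: W_def cinner_add_right cinner_scaleR_right)
  have Wsc: "t *\<^sub>R b \<in> W" if "b \<in> W" for b t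
    using that by (simp add: W_def cinner_scaleR_right)
  have Winv: "A *v a \<in> W" if "a \<in> W" for a
  proof -
    have "cinner (v i) (A *v a) = 0" if "i \<in> I" for i
      using herm_cinner[OF hA, of "v i" a] ev that \<open>a \<in> W\<close>
      by (simp add: cinner_scaleC_left W_def)
    then show ?thesis by (simp add: W_def)
  qed
  have clW: "closed W"
  proof -
    have "W = (\<Inter>i\<in>I. {x. cinner (v i) x = 0})" by (auto simp: W_def)
    moreover have "closed {x. cinner (v i) x = 0}" for i
      by (rule closed_Collect_eq) (auto intro: cont_cinner continuous_intros)
    ultimately show ?thesis by auto
  qed
  define K where "K = W \<inter> sphere 0 1"
  have cK: "compact K" unfolding K_def by (rule closed_Int_compact[OF clW compact_sphere])
  have x0W: "x0 \<in> W" using x0 by (simp add: W_def)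
  have "(1 / norm x0) *\<^sub>R x0 \<in> K" using Wsc[OF x0W] x0nz by (simp add: K_def)
  hence neK: "K \<noteq> {}" by auto
  define f where "f = (\<lambda>x::complex^'n. x \<bullet> (A *v x))"
  have cf: "continuous_on K f" unfolding f_def
    by (rule continuous_on_subset[OF cont_quad]) auto
  obtain u where uK: "u \<in> K" and umax: "\<forall>y\<in>K. f y \<le> f u"
    using continuous_attains_sup[OF cK neK cf] by blast
  define \<mu> where "\<mu> = f u"
  have bound: "f x \<le> \<mu> * (x \<bullet> x)" if "x \<in> W" for x
  proof (cases "x = 0")
    case True then show ?thesis by (simp add: f_def)
  next
    case False
    let ?x = "(1 / norm x) *\<^sub>R x"
    have "?x \<in> K" using Wsc[OF that] False by (simp add: K_def)
    hence "f ?x \<le> \<mu>" using umax by (simp add: \<mu>_def)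
    moreover have "f ?x = f x / (norm x)^2"
      by (simp add: f_def mult_scaleR_vec power2_eq_square)
    ultimately have "f x \<le> \<mu> * (norm x)^2" using False
      by (simp add: divide_le_eq)
    then show ?thesis by (simp add: power2_norm_eq_inner)
  qed
  define F where "F = (\<lambda>y. A *v y - \<mu> *\<^sub>R y)"
  have uW: "u \<in> W" and nu: "norm u = 1" using uK by (auto simp: K_def)
  have FW: "F y \<in> W" if "y \<in> W" for y
    using Wlin[OF Winv[OF that] that, of "-\<mu>"] by (simp add: F_def)
  have "F u = 0"
  proof (rule core[of F])
    show "F (x + t *\<^sub>R y) = F x + t *\<^sub>R F y" for x y t
      unfolding F_def matrix_vector_right_distrib mult_scaleR_vec
      by (simp add: scaleR_add_right scaleR_diff_right)
    show "x \<bullet> F y = F x \<bullet> y" for x y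
      by (simp add: F_def inner_diff_left inner_diff_right herm_inner[OF hA])
    show "(u + t *\<^sub>R F u) \<bullet> F (u + t *\<^sub>R F u) \<le> 0" for t
    proof -
      have "u + t *\<^sub>R F u \<in> W" by (rule Wlin[OF uW FW[OF uW]])
      from bound[OF this] show ?thesis by (simp add: F_def f_def inner_diff_right)
    qed
    have "u \<bullet> u = 1" using nu by (simp add: power2_norm_eq_inner[symmetric])
    then show "u \<bullet> F u = 0" by (simp add: F_def inner_diff_right \<mu>_def f_def)
  qed
  hence "A *v u = complex_of_real \<mu> *s u" by (simp add: F_def scaleR_vec_eq)
  with uW nu show ?thesis by (auto simp: W_def)
qed


lemma nontriv:
  fixes v :: "'n \<Rightarrow> complex^'n"
  assumes "j \<notin> I"
  shows "\<exists>x. x \<noteq> 0 \<and> (\<forall>i\<in>I. cinner (v i) x = 0)"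
proof (rule ccontr)
  assume H: "\<not> ?thesis"
  define M :: "complex^'n^'n" where "M = (\<chi> k m. if k \<in> I then cnj (v k $ m) else 0)"
  have Mx: "M *v x = (\<chi> k. if k \<in> I then cinner (v k) x else 0)" for x
    by (simp add: M_def matrix_vector_mult_def cinner_def vec_eq_iff)
  have "\<forall>x. M *v x = 0 \<longrightarrow> x = 0"
  proof (intro allI impI)
    fix x assume "M *v x = 0"
    hence "\<forall>i\<in>I. cinner (v i) x = 0" by (auto simp: Mx vec_eq_iff split: if_splits)
    then show "x = 0" using H by blast
  qed
  then obtain B where "B ** M = mat 1" using matrix_left_invertible_ker by blast
  hence "M ** B = mat 1" using matrix_left_right_inverse by blast
  hence "(M ** B) $ j $ j = 1" by (simp add: mat_def)
  moreover have "(M ** B) $ j $ j = 0" using assms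
    by (simp add: M_def matrix_matrix_mult_def)
  ultimately show False by simp
qed

definition orthon :: "('n \<Rightarrow> complex^'n) \<Rightarrow> 'n set \<Rightarrow> bool" where
  "orthon v I \<longleftrightarrow> (\<forall>a\<in>I. \<forall>b\<in>I. cinner (v a) (v b) = (if a = b then 1 else 0))"

lemma spectral_set:
  fixes A :: "complex^'n^'n"
  assumes hA: "herm A" and fin: "finite I"
  shows "\<exists>v l. orthon v I \<and> (\<forall>a\<in>I. A *v v a = complex_of_real (l a) *s v a)"
  using fin
proof (induction I rule: finite_induct)
  case empty
  then show ?case by (simp add: orthon_def)
next
  case (insert j I)
  then obtain v l where o: "orthon v I" and e: "\<forall>a\<in>I. A *v v a = complex_of_real (l a) *s v a"
    by blast
  obtain x where "x \<noteq> 0" "\<forall>i\<in>I. cinner (v i) x = 0" using nontriv[OF insert(2)] by blast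
  then obtain u \<mu> where u: "\<forall>i\<in>I. cinner (v i) u = 0" "norm u = 1" "A *v u = complex_of_real \<mu> *s u"
    using eigvec[OF hA e] by blast
  have uu: "cinner u u = 1" using u(2) by (simp add: cinner_self)
  have ui: "cinner u (v i) = 0" if "i \<in> I" for i
    using u(1) that cinner_cnj[of "v i" u] by simp
  have "orthon (v(j:=u)) (insert j I)"
    using o insert(2) uu u(1) ui unfolding orthon_def by auto
  moreover have "\<forall>a\<in>insert j I. A *v (v(j:=u)) a = complex_of_real ((l(j:=\<mu>)) a) *s (v(j:=u)) a"
    using e u(3) insert(2) by auto
  ultimately show ?case by blast
qed

lemma spectral:
  fixes A :: "complex^'n^'n"
  assumes hA: "herm A"
  shows "\<exists>v l. orthon v UNIV \<and> (\<forall>a. A *v v a = complex_of_real (l a) *s v a)"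
  using spectral_set[OF hA, of UNIV] by auto

lemma complete:
  fixes v :: "'n \<Rightarrow> complex^'n"
  assumes o: "orthon v UNIV"
  shows "(\<Sum>b\<in>UNIV. v b $ a * cnj (v b $ c)) = (if a = c then 1 else 0)"
proof -
  define U :: "complex^'n^'n" where "U = (\<chi> a b. v b $ a)"
  have "cadj U ** U = mat 1"
    using o by (simp add: U_def cadj_def matrix_matrix_mult_def mat_def vec_eq_iff orthon_def cinner_def)
  hence "U ** cadj U = mat 1" using matrix_left_right_inverse by blast
  hence "(U ** cadj U) $ a $ c = mat 1 $ a $ c" by simp
  then show ?thesis by (simp add: U_def cadj_def matrix_matrix_mult_def mat_def)
qed


definition Mf :: "('n \<Rightarrow> complex^'n) \<Rightarrow> ('n \<Rightarrow> real) \<Rightarrow> complex^'n^'n" where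
  "Mf v f = (\<chi> a c. \<Sum>b\<in>UNIV. complex_of_real (f b) * (v b $ a * cnj (v b $ c)))"

lemma Mf_herm: "herm (Mf v f)"
  by (simp add: herm_def cadj_def Mf_def vec_eq_iff mult_ac)

lemma Mf_mult:
  assumes o: "orthon v UNIV"
  shows "Mf v f ** Mf v g = Mf v (\<lambda>b. f b * g b)"
proof -
  have "(\<Sum>d\<in>UNIV. (\<Sum>b\<in>UNIV. complex_of_real (f b) * (v b $ a * cnj (v b $ d))) *
          (\<Sum>b'\<in>UNIV. complex_of_real (g b') * (v b' $ d * cnj (v b' $ c))))
      = (\<Sum>b\<in>UNIV. complex_of_real (f b * g b) * (v b $ a * cnj (v b $ c)))" for a c
  proof -
    have "(\<Sum>d\<in>UNIV. (\<Sum>b\<in>UNIV. complex_of_real (f b) * (v b $ a * cnj (v b $ d))) *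
          (\<Sum>b'\<in>UNIV. complex_of_real (g b') * (v b' $ d * cnj (v b' $ c))))
      = (\<Sum>d\<in>UNIV. \<Sum>b\<in>UNIV. \<Sum>b'\<in>UNIV. (complex_of_real (f b) * (v b $ a * cnj (v b $ d))) *
          (complex_of_real (g b') * (v b' $ d * cnj (v b' $ c))))"
      by (simp add: sum_product)
    also have "\<dots> = (\<Sum>b\<in>UNIV. \<Sum>d\<in>UNIV. \<Sum>b'\<in>UNIV. (complex_of_real (f b) * (v b $ a * cnj (v b $ d))) *
          (complex_of_real (g b') * (v b' $ d * cnj (v b' $ c))))"
      by (rule sum.swap)
    also have "\<dots> = (\<Sum>b\<in>UNIV. \<Sum>b'\<in>UNIV. \<Sum>d\<in>UNIV. (complex_of_real (f b) * (v b $ a * cnj (v b $ d))) *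
          (complex_of_real (g b') * (v b' $ d * cnj (v b' $ c))))"
      by (rule sum.cong[OF refl], rule sum.swap)
    also have "\<dots> = (\<Sum>b\<in>UNIV. \<Sum>b'\<in>UNIV. complex_of_real (f b) * complex_of_real (g b') *
           (v b $ a * cnj (v b' $ c)) * cinner (v b) (v b'))"
      by (simp add: cinner_def sum_distrib_left mult_ac)
    also have "\<dots> = (\<Sum>b\<in>UNIV. complex_of_real (f b * g b) * (v b $ a * cnj (v b $ c)))"
    proof -
      have oo: "cinner (v b) (v b') = (if b = b' then 1 else 0)" for b b'
        using o by (simp add: orthon_def)
      show ?thesis by (simp add: oo if_distrib cong: if_cong)
    qed
    finally show ?thesis .
  qed
  then show ?thesis by (simp add: Mf_def matrix_matrix_mult_def vec_eq_iff)
qed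

lemma Mf_quad: "cinner x (Mf v f *v x) = complex_of_real (\<Sum>b\<in>UNIV. f b * (cmod (cinner (v b) x))^2)"
proof -
  have "cinner x (Mf v f *v x) = (\<Sum>a\<in>UNIV. \<Sum>c\<in>UNIV. \<Sum>b\<in>UNIV.
          cnj (x $ a) * (complex_of_real (f b) * (v b $ a * cnj (v b $ c))) * x $ c)"
    by (simp add: cinner_def Mf_def matrix_vector_mult_def sum_distrib_left sum_distrib_right mult_ac)
  also have "\<dots> = (\<Sum>a\<in>UNIV. \<Sum>b\<in>UNIV. \<Sum>c\<in>UNIV.
          cnj (x $ a) * (complex_of_real (f b) * (v b $ a * cnj (v b $ c))) * x $ c)"
    by (rule sum.cong[OF refl], rule sum.swap)
  also have "\<dots> = (\<Sum>b\<in>UNIV. \<Sum>a\<in>UNIV. \<Sum>c\<in>UNIV.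
          cnj (x $ a) * (complex_of_real (f b) * (v b $ a * cnj (v b $ c))) * x $ c)"
    by (rule sum.swap)
  also have "\<dots> = (\<Sum>b\<in>UNIV. complex_of_real (f b) * (cnj (cinner (v b) x) * cinner (v b) x))"
    by (simp add: cinner_def sum_distrib_left sum_distrib_right mult_ac)
  also have "\<dots> = complex_of_real (\<Sum>b\<in>UNIV. f b * (cmod (cinner (v b) x))^2)"
    by (simp add: complex_norm_square[symmetric] mult_ac)
  finally show ?thesis .
qed

lemma Mf_repr:
  fixes A :: "complex^'n^'n"
  assumes o: "orthon v UNIV" and e: "\<forall>b. A *v v b = complex_of_real (l b) *s v b"
  shows "A = Mf v l"
proof -
  have "A $ a $ c = (\<Sum>b\<in>UNIV. complex_of_real (l b) * (v b $ a * cnj (v b $ c)))" for a c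
  proof -
    have "A $ a $ c = (\<Sum>d\<in>UNIV. A $ a $ d * (if d = c then 1 else 0))"
      by (simp add: if_distrib cong: if_cong)
    also have "\<dots> = (\<Sum>d\<in>UNIV. A $ a $ d * (\<Sum>b\<in>UNIV. v b $ d * cnj (v b $ c)))"
      using complete[OF o] by simp
    also have "\<dots> = (\<Sum>d\<in>UNIV. \<Sum>b\<in>UNIV. A $ a $ d * (v b $ d * cnj (v b $ c)))"
      by (simp add: sum_distrib_left)
    also have "\<dots> = (\<Sum>b\<in>UNIV. \<Sum>d\<in>UNIV. A $ a $ d * (v b $ d * cnj (v b $ c)))"
      by (rule sum.swap)
    also have "\<dots> = (\<Sum>b\<in>UNIV. (A *v v b) $ a * cnj (v b $ c))"
      by (simp add: matrix_vector_mult_def sum_distrib_right mult_ac) (simp add: sum_distrib_left mult_ac)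
    also have "\<dots> = (\<Sum>b\<in>UNIV. complex_of_real (l b) * (v b $ a * cnj (v b $ c)))"
      using e by (simp add: mult_ac)
    finally show ?thesis .
  qed
  then show ?thesis by (simp add: Mf_def vec_eq_iff)
qed


lemma mult_scaleC_vec: "(A::complex^'n^'m) *v (c *s x) = c *s (A *v x)"
  by (simp add: vec_eq_iff matrix_vector_mult_def sum_distrib_left mult_ac)

definition ev :: "'n \<Rightarrow> complex^'n" where "ev k = (\<chi> m. if m = k then 1 else 0)"

lemma mult_ite1: "(x::complex) * (if c then 1 else 0) = (if c then x else 0)" by simp
lemma mult_ite2: "cnj (if c then 1 else 0) * (x::complex) = (if c then x else 0)" by simp

lemma cinner_ev: "cinner (ev a) (P *v ev b) = P $ a $ b"
  by (simp add: cinner_def ev_def matrix_vector_mult_def mult_ite1 mult_ite2)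

lemma quad_expand:
  "cinner (u + c *s w) (P *v (u + c *s w)) =
     cinner u (P *v u) + c * cinner u (P *v w) + cnj c * cinner w (P *v u) + cnj c * c * cinner w (P *v w)"
  by (simp add: matrix_vector_right_distrib mult_scaleC_vec cinner_add_left cinner_add_right
      cinner_scaleC_left cinner_scaleC_right algebra_simps)

lemma psd_herm: assumes "psd P" shows "herm P"
proof -
  have im: "Im (cinner x (P *v x)) = 0" for x using assms by (simp add: psd_def)
  have d: "Im (P $ a $ a) = 0" for a using im[of "ev a"] by (simp add: cinner_ev)
  have h: "cnj (P $ b $ a) = P $ a $ b" for a b
  proof -
    have 1: "Im (P $ a $ b + P $ b $ a) = 0"
      using im[of "ev a + 1 *s ev b"] d[of a] d[of b] unfolding quad_expand by (simp add: cinner_ev)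
    have 2: "Im (\<i> * P $ a $ b - \<i> * P $ b $ a) = 0"
      using im[of "ev a + \<i> *s ev b"] d[of a] d[of b] unfolding quad_expand by (simp add: cinner_ev)
    from 1 2 show ?thesis by (simp add: complex_eq_iff)
  qed
  show ?thesis by (simp add: herm_def cadj_def vec_eq_iff h)
qed

lemma psd_ker:
  assumes p: "psd P" and z: "Re (cinner w (P *v w)) = 0"
  shows "P *v w = 0"
proof -
  have hP: "herm P" by (rule psd_herm[OF p])
  define F where "F = (\<lambda>x. - (P *v x))"
  have "F w = 0"
  proof (rule core[of F])
    show "F (x + t *\<^sub>R y) = F x + t *\<^sub>R F y" for x y t
      by (simp add: F_def matrix_vector_right_distrib mult_scaleR_vec)
    show "x \<bullet> F y = F x \<bullet> y" for x y
      by (simp add: F_def herm_inner[OF hP])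
    have Fx: "x \<bullet> F x = - Re (cinner x (P *v x))" for x
      by (simp add: F_def inner_cinner[symmetric])
    show "(w + t *\<^sub>R F w) \<bullet> F (w + t *\<^sub>R F w) \<le> 0" for t
      using p unfolding Fx psd_def by simp
    show "w \<bullet> F w = 0" using z unfolding Fx by simp
  qed
  then show ?thesis by (simp add: F_def)
qed

lemma psd_Mf: assumes "\<forall>b. f b \<ge> 0" shows "psd (Mf v f)"
  using assms by (simp add: psd_def Mf_quad sum_nonneg)

lemma cadj_diff: "cadj (A - B) = cadj A - cadj B"
  by (simp add: cadj_def vec_eq_iff)

lemma sqrt_unique:
  fixes P Q :: "complex^'n^'n"
  assumes pP: "psd P" and pQ: "psd Q" and eq: "P ** P = Q ** Q"
  shows "P = Q"
proof -
  define D where "D = P - Q"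
  have hD: "herm D" using psd_herm[OF pP] psd_herm[OF pQ] by (simp add: D_def herm_def cadj_diff)
  obtain v l where o: "orthon v UNIV" and e: "\<forall>a. D *v v a = complex_of_real (l a) *s v a"
    using spectral[OF hD] by blast
  have l0: "l b = 0" for b
  proof (rule ccontr)
    assume nz: "l b \<noteq> 0"
    define w where "w = v b"
    have ww: "cinner w w = 1" using o by (simp add: orthon_def w_def)
    have Dw: "D *v w = complex_of_real (l b) *s w" using e by (simp add: w_def)
    have "P *v (D *v w) + D *v (Q *v w) = (P ** P) *v w - (Q ** Q) *v w"
      by (simp add: D_def matrix_vector_mult_diff_distrib matrix_vector_mult_diff_rdistrib
          matrix_vector_mul_assoc[symmetric])
    hence "P *v (D *v w) + D *v (Q *v w) = 0" using eq by simp
    hence "cinner w (P *v (D *v w)) + cinner w (D *v (Q *v w)) = 0"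
      by (metis cinner_add_right cinner_zero_right)
    hence "complex_of_real (l b) * (cinner w (P *v w) + cinner w (Q *v w)) = 0"
      using herm_cinner[OF hD, of w "Q *v w"] Dw
      by (simp add: mult_scaleC_vec cinner_scaleC_right cinner_scaleC_left distrib_left)
    hence s: "cinner w (P *v w) + cinner w (Q *v w) = 0" using nz by simp
    have "Re (cinner w (P *v w)) \<ge> 0" "Re (cinner w (Q *v w)) \<ge> 0"
      using pP pQ by (auto simp: psd_def)
    with s have "Re (cinner w (P *v w)) = 0" "Re (cinner w (Q *v w)) = 0"
      by (simp_all add: complex_eq_iff)
    hence "P *v w = 0" "Q *v w = 0" using psd_ker[OF pP] psd_ker[OF pQ] by auto
    hence "D *v w = 0" by (simp add: D_def matrix_vector_mult_diff_rdistrib)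
    hence "complex_of_real (l b) *s w = 0" using Dw by simp
    hence "cinner w (complex_of_real (l b) *s w) = cinner w 0" by (rule arg_cong)
    hence "complex_of_real (l b) = 0" using ww by (simp add: cinner_scaleC_right)
    with nz show False by simp
  qed
  have "D = Mf v l" by (rule Mf_repr[OF o e])
  also have "\<dots> = 0" using l0 by (simp add: Mf_def vec_eq_iff)
  finally show ?thesis by (simp add: D_def)
qed

lemma abs_repr:
  fixes X :: "complex^'n^'n"
  assumes hX: "herm X"
  shows "\<exists>v l. orthon v UNIV \<and> X = Mf v l \<and> mat_abs X = Mf v (\<lambda>b. \<bar>l b\<bar>)"
proof -
  obtain v l where o: "orthon v UNIV" and e: "\<forall>a. X *v v a = complex_of_real (l a) *s v a"
    using spectral[OF hX] by blast
  have X: "X = Mf v l" by (rule Mf_repr[OF o e])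
  define P where "P = Mf v (\<lambda>b. \<bar>l b\<bar>)"
  have pP: "psd P" unfolding P_def by (rule psd_Mf) auto
  have PP: "P ** P = cadj X ** X"
  proof -
    have "P ** P = Mf v (\<lambda>b. \<bar>l b\<bar> * \<bar>l b\<bar>)" unfolding P_def by (rule Mf_mult[OF o])
    also have "\<dots> = Mf v (\<lambda>b. l b * l b)" by (simp add: abs_mult_self_eq)
    also have "\<dots> = X ** X" unfolding X by (rule Mf_mult[OF o, symmetric])
    finally show ?thesis using hX by (simp add: herm_def)
  qed
  have "mat_abs X = P"
    unfolding mat_abs_def
  proof (rule the_equality)
    show "psd P \<and> P ** P = cadj X ** X" using pP PP by simp
    fix Q assume "psd Q \<and> Q ** Q = cadj X ** X"
    then show "Q = P" using sqrt_unique[of Q P] pP PP by auto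
  qed
  with o X show ?thesis by (auto simp: P_def)
qed


lemma comp_le1: assumes o: "orthon v UNIV" shows "cmod (v b $ a) \<le> 1"
proof -
  have "cinner (v b) (v b) = 1" using o by (simp add: orthon_def)
  hence "complex_of_real ((norm (v b))^2) = 1" by (simp only: cinner_self)
  hence "(norm (v b))^2 = 1" by (simp only: of_real_eq_1_iff)
  hence "norm (v b) = 1" using norm_ge_zero[of "v b"] by (auto simp: power2_eq_1_iff)
  then show ?thesis using Finite_Cartesian_Product.norm_nth_le[of "v b" a] by simp
qed

lemma trace_Mf: assumes o: "orthon v UNIV" shows "trace (Mf v f) = complex_of_real (\<Sum>b\<in>UNIV. f b)"
proof -
  have "trace (Mf v f) = (\<Sum>a\<in>UNIV. \<Sum>b\<in>UNIV. complex_of_real (f b) * (v b $ a * cnj (v b $ a)))"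
    by (simp add: trace_def Mf_def)
  also have "\<dots> = (\<Sum>b\<in>UNIV. \<Sum>a\<in>UNIV. complex_of_real (f b) * (v b $ a * cnj (v b $ a)))"
    by (rule sum.swap)
  also have "\<dots> = (\<Sum>b\<in>UNIV. complex_of_real (f b) * cinner (v b) (v b))"
    by (simp add: cinner_def sum_distrib_left mult_ac)
  also have "\<dots> = complex_of_real (\<Sum>b\<in>UNIV. f b)" using o by (simp add: orthon_def)
  finally show ?thesis .
qed

lemma trnorm_herm:
  assumes hX: "herm X"
  shows "\<exists>v l. orthon v UNIV \<and> X = Mf v l \<and> trnorm X = (\<Sum>b\<in>UNIV. \<bar>l b\<bar>)"
proof -
  obtain v l where o: "orthon v UNIV" and X: "X = Mf v l" and A: "mat_abs X = Mf v (\<lambda>b. \<bar>l b\<bar>)"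
    using abs_repr[OF hX] by blast
  have "trnorm X = (\<Sum>b\<in>UNIV. \<bar>l b\<bar>)" by (simp add: trnorm_def A trace_Mf[OF o])
  with o X show ?thesis by blast
qed

lemma trnorm_lower:
  assumes hX: "herm X"
  shows "cmod (X $ a $ c) \<le> trnorm X"
proof -
  obtain v l where o: "orthon v UNIV" and X: "X = Mf v l" and T: "trnorm X = (\<Sum>b\<in>UNIV. \<bar>l b\<bar>)"
    using trnorm_herm[OF hX] by blast
  have "cmod (X $ a $ c) = cmod (\<Sum>b\<in>UNIV. complex_of_real (l b) * (v b $ a * cnj (v b $ c)))"
    by (simp add: X Mf_def)
  also have "\<dots> \<le> (\<Sum>b\<in>UNIV. cmod (complex_of_real (l b) * (v b $ a * cnj (v b $ c))))"
    by (rule norm_sum)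
  also have "\<dots> \<le> (\<Sum>b\<in>UNIV. \<bar>l b\<bar>)"
  proof (rule sum_mono)
    fix b
    have "cmod (v b $ a) * cmod (v b $ c) \<le> 1 * 1"
      using comp_le1[OF o] by (intro mult_mono) auto
    hence "\<bar>l b\<bar> * (cmod (v b $ a) * cmod (v b $ c)) \<le> \<bar>l b\<bar>"
      using mult_left_mono[of _ 1 "\<bar>l b\<bar>"] by simp
    then show "cmod (complex_of_real (l b) * (v b $ a * cnj (v b $ c))) \<le> \<bar>l b\<bar>"
      by (simp add: norm_mult)
  qed
  finally show ?thesis using T by simp
qed

lemma trnorm_upper:
  assumes hX: "herm X"
  shows "trnorm X \<le> real CARD('n) * (\<Sum>a\<in>UNIV. \<Sum>c\<in>UNIV. cmod ((X::complex^'n^'n) $ a $ c))"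
proof -
  obtain v l where o: "orthon v UNIV" and X: "X = Mf v l" and T: "trnorm X = (\<Sum>b\<in>UNIV. \<bar>l b\<bar>)"
    using trnorm_herm[OF hX] by blast
  define S where "S = (\<Sum>a\<in>UNIV. \<Sum>c\<in>UNIV. cmod (X $ a $ c))"
  have lb: "\<bar>l b\<bar> \<le> S" for b
  proof -
    have oo: "cinner (v b') (v b) = (if b' = b then 1 else 0)" for b'
      using o by (simp add: orthon_def)
    have oo2: "(cmod (cinner (v b') (v b)))^2 = (if b' = b then 1 else 0)" for b'
      by (simp add: oo)
    have ite: "(x::real) * (if c then 1 else 0) = (if c then x else 0)" for x c by simp
    have "cinner (v b) (X *v v b) = complex_of_real (l b)"
      unfolding X Mf_quad oo2 ite by simp
    hence "\<bar>l b\<bar> = cmod (\<Sum>a\<in>UNIV. cnj (v b $ a) * (\<Sum>c\<in>UNIV. X $ a $ c * v b $ c))"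
      by (simp add: cinner_def matrix_vector_mult_def)
    also have "\<dots> \<le> (\<Sum>a\<in>UNIV. cmod (cnj (v b $ a) * (\<Sum>c\<in>UNIV. X $ a $ c * v b $ c)))"
      by (rule norm_sum)
    also have "\<dots> \<le> S" unfolding S_def
    proof (rule sum_mono)
      fix a
      have "cmod (\<Sum>c\<in>UNIV. X $ a $ c * v b $ c) \<le> (\<Sum>c\<in>UNIV. cmod (X $ a $ c * v b $ c))"
        by (rule norm_sum)
      also have "\<dots> \<le> (\<Sum>c\<in>UNIV. cmod (X $ a $ c))"
        by (rule sum_mono) (simp add: norm_mult comp_le1[OF o] mult_left_le)
      finally have h: "cmod (\<Sum>c\<in>UNIV. X $ a $ c * v b $ c) \<le> (\<Sum>c\<in>UNIV. cmod (X $ a $ c))" .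
      have "cmod (cnj (v b $ a)) \<le> 1" using comp_le1[OF o] by simp
      then show "cmod (cnj (v b $ a) * (\<Sum>c\<in>UNIV. X $ a $ c * v b $ c)) \<le> (\<Sum>c\<in>UNIV. cmod (X $ a $ c))"
        unfolding norm_mult
        using mult_right_mono[OF \<open>cmod (cnj (v b $ a)) \<le> 1\<close> norm_ge_zero[of "\<Sum>c\<in>UNIV. X $ a $ c * v b $ c"]] h
        by simp
    qed
    finally show ?thesis .
  qed
  have "trnorm X \<le> (\<Sum>b\<in>(UNIV::'n set). S)" unfolding T by (rule sum_mono) (rule lb)
  then show ?thesis by (simp add: S_def)
qed

lemma entry_le_norm: "cmod ((X::complex^'n^'n) $ a $ c) \<le> norm X"
  using Finite_Cartesian_Product.norm_nth_le[of "X $ a" c] Finite_Cartesian_Product.norm_nth_le[of X a] by simp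

lemma myl1: "norm (x::'a::real_normed_vector^'n) \<le> (\<Sum>i\<in>UNIV. norm (x$i))"
  by (simp add: norm_vec_def L2_set_le_sum)

lemma norm_le_entries: "norm (X::complex^'n^'n) \<le> (\<Sum>a\<in>UNIV. \<Sum>c\<in>UNIV. cmod (X $ a $ c))"
proof -
  have "norm X \<le> (\<Sum>a\<in>UNIV. norm (X $ a))" by (rule myl1)
  also have "\<dots> \<le> (\<Sum>a\<in>UNIV. \<Sum>c\<in>UNIV. cmod (X $ a $ c))"
    by (rule sum_mono) (rule myl1)
  finally show ?thesis .
qed

lemma norm_le_trnorm:
  assumes "herm X"
  shows "norm (X::complex^'n^'n) \<le> real CARD('n) * real CARD('n) * trnorm X"
proof -
  have "(\<Sum>a\<in>UNIV. \<Sum>c\<in>(UNIV::'n set). cmod (X $ a $ c)) \<le> (\<Sum>a\<in>(UNIV::'n set). \<Sum>c\<in>(UNIV::'n set). trnorm X)"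
    by (rule sum_mono)+ (rule trnorm_lower[OF assms])
  hence "norm X \<le> (\<Sum>a\<in>(UNIV::'n set). \<Sum>c\<in>(UNIV::'n set). trnorm X)"
    using norm_le_entries[of X] by linarith
  then show ?thesis by simp
qed

lemma trnorm_le_norm:
  assumes "herm X"
  shows "trnorm (X::complex^'n^'n) \<le> real CARD('n) * (real CARD('n) * (real CARD('n) * norm X))"
proof -
  have "(\<Sum>a\<in>UNIV. \<Sum>c\<in>(UNIV::'n set). cmod (X $ a $ c)) \<le> (\<Sum>a\<in>(UNIV::'n set). \<Sum>c\<in>(UNIV::'n set). norm X)"
    by (rule sum_mono)+ (rule entry_le_norm)
  hence "(\<Sum>a\<in>UNIV. \<Sum>c\<in>(UNIV::'n set). cmod (X $ a $ c)) \<le> real CARD('n) * (real CARD('n) * norm X)"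
    by simp
  hence "real CARD('n) * (\<Sum>a\<in>UNIV. \<Sum>c\<in>(UNIV::'n set). cmod (X $ a $ c))
     \<le> real CARD('n) * (real CARD('n) * (real CARD('n) * norm X))"
    by (rule mult_left_mono) simp
  with trnorm_upper[OF assms] show ?thesis by linarith
qed


lemma cadj_lin: "cadj (u *\<^sub>R A + v *\<^sub>R B) = u *\<^sub>R cadj A + v *\<^sub>R cadj B"
  by (simp add: cadj_def vec_eq_iff scaleR_conv_of_real[where 'a=complex])

lemma trace_lin: "trace (u *\<^sub>R (A::complex^'n^'n) + v *\<^sub>R B) = u *\<^sub>R trace A + v *\<^sub>R trace B"
  by (simp add: trace_def sum.distrib scaleR_sum_right)

lemma affine_H: "affine {A::complex^'n^'n. herm A \<and> trace A = 1}"
  unfolding affine_def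
proof (intro ballI allI impI)
  fix x y :: "complex^'n^'n" and u v :: real
  assume x: "x \<in> {A. herm A \<and> trace A = 1}" and y: "y \<in> {A. herm A \<and> trace A = 1}" and uv: "u + v = 1"
  have "herm (u *\<^sub>R x + v *\<^sub>R y)" using x y by (simp add: herm_def cadj_lin)
  moreover have "trace (u *\<^sub>R x + v *\<^sub>R y) = 1"
  proof -
    have "trace (u *\<^sub>R x + v *\<^sub>R y) = u *\<^sub>R (1::complex) + v *\<^sub>R 1"
      using x y by (simp add: trace_lin)
    also have "\<dots> = complex_of_real (u + v)" by (simp add: scaleR_conv_of_real[where 'a=complex])
    finally show ?thesis using uv by simp
  qed
  ultimately show "u *\<^sub>R x + v *\<^sub>R y \<in> {A. herm A \<and> trace A = 1}" by simp
qed

theorem mainTheorem8: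
  fixes S :: "nat \<Rightarrow> (complex^'n^'n) set"
    and V :: "(complex^'n^'n) set"
    and \<kappa> :: "complex^'n^'n"
  assumes S_dens: "\<And>n. S n \<subseteq> {\<rho>. density \<rho>}"
    and S_closed: "\<And>n. trclosed (S n)"
    and S_convex: "\<And>n. convex (S n)"
    and S_mono: "\<And>n. S n \<subseteq> S (Suc n)"
    and V_dens: "V \<subseteq> {\<rho>. density \<rho>}"
    and V_approx: "\<And>\<sigma> e. \<sigma> \<in> V \<Longrightarrow> e > 0 \<Longrightarrow> \<exists>N. \<exists>\<eta>\<in>S N. trdist \<sigma> \<eta> < e"
    and kV: "\<kappa> \<in> V"
    and k_int: "\<exists>\<delta>>0. \<forall>\<omega>. herm \<omega> \<and> trace \<omega> = 1 \<and> trnorm (\<omega> - \<kappa>) \<le> \<delta>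
                  \<longrightarrow> density \<omega> \<and> \<omega> \<in> V"
  shows "\<exists>n. \<kappa> \<in> S n"
proof -
  define U where "U = (\<Union>n. S n)"
  define n where "n = real CARD('n)"
  have n0: "n > 0" by (simp add: n_def)
  have Smono: "S a \<subseteq> S b" if "a \<le> b" for a b
    using lift_Suc_mono_le[of S, OF S_mono that] .
  have cU: "convex U"
    unfolding convex_def U_def
  proof (intro ballI allI impI)
    fix x y :: "complex^'n^'n" and u v :: real
    assume "x \<in> (\<Union>n. S n)" "y \<in> (\<Union>n. S n)" "0 \<le> u" "0 \<le> v" "u + v = 1"
    then obtain a b where xa: "x \<in> S a" and yb: "y \<in> S b" by blast
    have "x \<in> S (max a b)" "y \<in> S (max a b)" using xa yb Smono[of a "max a b"] Smono[of b "max a b"] by auto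
    hence "u *\<^sub>R x + v *\<^sub>R y \<in> S (max a b)"
      using S_convex \<open>0 \<le> u\<close> \<open>0 \<le> v\<close> \<open>u + v = 1\<close> unfolding convex_def by blast
    then show "u *\<^sub>R x + v *\<^sub>R y \<in> (\<Union>n. S n)" by blast
  qed
  have dens_herm: "herm x" if "density x" for x using that by (simp add: density_def)
  have herm_diff: "herm (x - y)" if "herm x" "herm y" for x y
    using that by (simp add: herm_def cadj_diff)
  have VU: "V \<subseteq> closure U"
  proof
    fix \<sigma> assume s: "\<sigma> \<in> V"
    show "\<sigma> \<in> closure U"
      unfolding closure_approachable
    proof (intro allI impI)
      fix e :: real assume e: "e > 0"
      define e' where "e' = e / (2 * n * n)"
      have e': "e' > 0" using e n0 by (simp add: e'_def)
      obtain N \<eta> where \<eta>: "\<eta> \<in> S N" and d: "trdist \<sigma> \<eta> < e'"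
        using V_approx[OF s e'] by blast
      have h: "herm (\<sigma> - \<eta>)"
        using herm_diff dens_herm V_dens S_dens s \<eta> by blast
      have "norm (\<sigma> - \<eta>) \<le> n * n * trnorm (\<sigma> - \<eta>)"
        using norm_le_trnorm[OF h] by (simp add: n_def)
      also have "\<dots> < n * n * (2 * e')"
        using d n0 by (simp add: trdist_def)
      also have "\<dots> = e" using n0 by (simp add: e'_def)
      finally have "dist \<eta> \<sigma> < e" by (simp add: dist_norm norm_minus_commute)
      then show "\<exists>y\<in>U. dist y \<sigma> < e" using \<eta> unfolding U_def by blast
    qed
  qed
  obtain \<delta> where \<delta>: "\<delta> > 0" and dV: "\<forall>\<omega>. herm \<omega> \<and> trace \<omega> = 1 \<and> trnorm (\<omega> - \<kappa>) \<le> \<delta>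
                  \<longrightarrow> density \<omega> \<and> \<omega> \<in> V"
    using k_int by blast
  define r where "r = \<delta> / (n * (n * n))"
  have r: "r > 0" using \<delta> n0 by (simp add: r_def)
  define H where "H = {A::complex^'n^'n. herm A \<and> trace A = 1}"
  have hk: "herm \<kappa>" using kV V_dens dens_herm by blast
  have ball_sub: "ball \<kappa> r \<inter> H \<subseteq> closure U"
  proof
    fix \<omega> assume w: "\<omega> \<in> ball \<kappa> r \<inter> H"
    hence hw: "herm \<omega>" and tw: "trace \<omega> = 1" and dw: "norm (\<omega> - \<kappa>) < r"
      by (auto simp: H_def dist_norm norm_minus_commute)
    have "trnorm (\<omega> - \<kappa>) \<le> n * (n * (n * norm (\<omega> - \<kappa>)))"
      using trnorm_le_norm[OF herm_diff[OF hw hk]] by (simp add: n_def)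
    also have "\<dots> \<le> n * (n * (n * r))"
      using dw n0 by (intro mult_left_mono) auto
    also have "\<dots> = \<delta>" using n0 by (simp add: r_def)
    finally have "\<omega> \<in> V" using dV hw tw by blast
    then show "\<omega> \<in> closure U" using VU by blast
  qed
  have UH: "U \<subseteq> H" using S_dens by (auto simp: U_def H_def density_def)
  have affH: "affine hull (closure U) \<subseteq> H"
  proof -
    have aH: "affine H" unfolding H_def by (rule affine_H)
    have "affine hull U \<subseteq> H" by (rule hull_minimal[of U H affine, OF UH aH])
    then show ?thesis by simp
  qed
  have "\<kappa> \<in> rel_interior (closure U)"
    unfolding mem_rel_interior
  proof (intro exI conjI)
    show "open (ball \<kappa> r)" by simp
    show "\<kappa> \<in> ball \<kappa> r \<inter> closure U" using r kV VU by auto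
    show "ball \<kappa> r \<inter> affine hull (closure U) \<subseteq> closure U"
      using ball_sub affH by blast
  qed
  hence "\<kappa> \<in> rel_interior U" using convex_rel_interior_closure[OF cU] by simp
  hence "\<kappa> \<in> U" using rel_interior_subset by blast
  then show ?thesis by (simp add: U_def)
qed

end
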